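(* Let $\boldsymbol{M}$ be a weight sequence satisfying $\operatorname{(sm)}$ with constants $C_0>0$, $H>1$ (i.e. $\log(m_{p+1}/m_p)\le C_0H^{p+1}$ for all $p\in\mathbb{N}_0$). Then for every $h>0$ one has $\mathcal{L}(C_{\boldsymbol{M},h}(0,\infty))\subset\mathcal{A}_{\boldsymbol{M}_{+1},Hh}(\mathbb{H})$, and $\mathcal{L}\colon C_{\boldsymbol{M},h}(0,\infty)\to\mathcal{A}_{\boldsymbol{M}_{+1},Hh}(\mathbb{H})$ is continuous. Consequently, $\mathcal{L}\colon C_{\{\boldsymbol{M}\}}(0,\infty)\to\mathcal{A}_{\{\boldsymbol{M}_{+1}\}}(\mathbb{H})$ is well-defined and continuous; moreover, it is injective.
   Context: Sequences are of positive reals indexed by $\mathbb{N}_0$; $m_p=M_{p+1}/M_p$. Weight sequence: $M_0=1$, $M_p^2\le M_{p-1}M_{p+1}$ ($p\ge1$), $m_p\to\infty$. $\boldsymbol{M}_{+1}=(M_{p+1})_p$. $\mathbb{H}$ is the open upper half-plane. For a sequence $\boldsymbol{N}$ and $h>0$, $\mathcal{A}_{\boldsymbol{N},h}(\mathbb{H})$ is the Banach space of holomorphic $f$ on $\mathbb{H}$ with norm $\sup_p\sup_{z\in\mathbb{H}}|f^{(p)}(z)|/(h^pN_p)<\infty$, and $\mathcal{A}_{\{\boldsymbol{N}\}}(\mathbb{H})=\bigcup_h\mathcal{A}_{\boldsymbol{N},h}(\mathbb{H})$ (inductive limit). $C_{\boldsymbol{M},h}(0,\infty)$ is the Banach space of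 continuous $\varphi$ on $(0,\infty)$ with norm $\sup_p\sup_{x>0}x^p|\varphi(x)|/(h^pM_p)<\infty$ (no support condition), $C_{\{\boldsymbol{M}\}}(0,\infty)=\bigcup_hC_{\boldsymbol{M},h}(0,\infty)$ (inductive limit). The Laplace transform is $\mathcal{L}(\varphi)(\zeta)=\int_0^\infty\varphi(x)e^{ix\zeta}\,dx$, $\zeta\in\overline{\mathbb{H}}$, considered on $\mathbb{H}$. *)

theory Defs
  imports "HOL-Complex_Analysis.Complex_Analysis"
begin

definition weight_seq :: "(nat \<Rightarrow> real) \<Rightarrow> bool" where
  "weight_seq M \<longleftrightarrow> (\<forall>p. M p > 0) \<and> M 0 = 1 \<and>
     (\<forall>p\<ge>1. (M p)\<^sup>2 \<le> M (p - 1) * M (p + 1)) \<and>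
     filterlim (\<lambda>p. M (Suc p) / M p) at_top sequentially"

definition quot_seq :: "(nat \<Rightarrow> real) \<Rightarrow> nat \<Rightarrow> real" where
  "quot_seq M p = M (Suc p) / M p"

definition sm_cond :: "(nat \<Rightarrow> real) \<Rightarrow> real \<Rightarrow> real \<Rightarrow> bool" where
  "sm_cond M C0 H \<longleftrightarrow> (\<forall>p. ln (quot_seq M (Suc p) / quot_seq M p) \<le> C0 * H ^ (p + 1))"

definition shift_seq :: "(nat \<Rightarrow> real) \<Rightarrow> nat \<Rightarrow> real" where
  "shift_seq M p = M (Suc p)"

definition upper_half :: "complex set" where
  "upper_half = {z. Im z > 0}"

definition CM :: "(nat \<Rightarrow> real) \<Rightarrow> real \<Rightarrow> (real \<Rightarrow> complex) set" where
  "CM M h = {\<phi>. continuous_on {0<..} \<phi> \<and>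
      (\<exists>C. \<forall>p. \<forall>x>0. x ^ p * norm (\<phi> x) / (h ^ p * M p) \<le> C)}"

definition CM_norm :: "(nat \<Rightarrow> real) \<Rightarrow> real \<Rightarrow> (real \<Rightarrow> complex) \<Rightarrow> real" where
  "CM_norm M h \<phi> = Sup {x ^ p * norm (\<phi> x) / (h ^ p * M p) | p x. x > 0}"

definition CM_roumieu :: "(nat \<Rightarrow> real) \<Rightarrow> (real \<Rightarrow> complex) set" where
  "CM_roumieu M = (\<Union>h\<in>{0<..}. CM M h)"

definition AN :: "(nat \<Rightarrow> real) \<Rightarrow> real \<Rightarrow> (complex \<Rightarrow> complex) set" where
  "AN N h = {f. f holomorphic_on upper_half \<and>
      (\<exists>C. \<forall>p. \<forall>z\<in>upper_half. norm ((deriv ^^ p) f z) / (h ^ p * N p) \<le> C)}"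

definition AN_norm :: "(nat \<Rightarrow> real) \<Rightarrow> real \<Rightarrow> (complex \<Rightarrow> complex) \<Rightarrow> real" where
  "AN_norm N h f = Sup {norm ((deriv ^^ p) f z) / (h ^ p * N p) | p z. z \<in> upper_half}"

definition AN_roumieu :: "(nat \<Rightarrow> real) \<Rightarrow> (complex \<Rightarrow> complex) set" where
  "AN_roumieu N = (\<Union>h\<in>{0<..}. AN N h)"

definition laplace :: "(real \<Rightarrow> complex) \<Rightarrow> complex \<Rightarrow> complex" where
  "laplace \<phi> \<zeta> = (LINT x:{0<..}|lborel. \<phi> x * exp (\<i> * complex_of_real x * \<zeta>))"

end

theory Submission
  imports Defs "HOL-Real_Asymp.Real_Asymp"
begin


lemma hk_to_lborel:
  fixes f :: "real \<Rightarrow> real"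
  assumes I: "(f has_integral I) S" and nn: "\<And>x. x \<in> S \<Longrightarrow> 0 \<le> f x"
    and m: "set_borel_measurable lborel S f"
  shows "set_integrable lborel S f" "(LINT x:S|lborel. f x) = I"
proof -
  have "f integrable_on S" using I by blast
  then have "f absolutely_integrable_on S"
    using nonnegative_absolutely_integrable_1 nn by blast
  then have "integrable (completion lborel) (\<lambda>x. indicator S x *\<^sub>R f x)"
    unfolding set_integrable_def .
  then show si: "set_integrable lborel S f"
    using m integrable_completion unfolding set_integrable_def set_borel_measurable_def
    by metis
  show "(LINT x:S|lborel. f x) = I"
    using set_borel_integral_eq_integral(2)[OF si] I by (simp add: integral_unique)
qed

definition gdom :: "real \<Rightarrow> real \<Rightarrow> real \<Rightarrow> real" where
  "gdom b a x = (if x \<le> b then 1/b else if x \<le> a then 1/x else a/x^2)"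

lemma gdom_has_integral:
  assumes b: "0 < b" and ba: "b \<le> a"
  shows "(gdom b a has_integral (2 + ln a - ln b)) {0<..}"
proof -
  have i1: "(gdom b a has_integral 1) {0..b}"
  proof -
    have "((\<lambda>x. 1/b) has_integral (Henstock_Kurzweil_Integration.content {0..b} *\<^sub>R (1/b))) {0..b}" by blast
    then have "((\<lambda>x. 1/b) has_integral 1) {0..b}" using b by simp
    then show ?thesis by (rule has_integral_eq[rotated]) (simp add: gdom_def)
  qed
  have i2: "(gdom b a has_integral (ln a - ln b)) {b..a}"
  proof -
    have "((\<lambda>x. 1/x) has_integral (ln a - ln b)) {b..a}"
      using ba b
      by (intro fundamental_theorem_of_calculus)
         (auto intro!: derivative_eq_intros simp flip: has_real_derivative_iff_has_vector_derivative simp: field_simps)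
    then show ?thesis by (rule has_integral_eq[rotated]) (auto simp add: gdom_def)
  qed
  have i3: "(gdom b a has_integral 1) {a..}"
  proof -
    have a: "a > 0" using b ba by simp
    have "((\<lambda>x. 1 / x ^ 2) has_integral 1 / (real (2 - 1) * a ^ (2 - 1))) {a..}"
      using has_integral_inverse_power_to_inf[of 2 a] a by simp
    then have "((\<lambda>x. a * (1 / x ^ 2)) has_integral a * (1 / (real (2 - 1) * a ^ (2 - 1)))) {a..}"
      by (rule has_integral_mult_right)
    then have "((\<lambda>x. a * (1 / x ^ 2)) has_integral 1) {a..}" using a by simp
    then show ?thesis
      by (rule has_integral_eq[rotated]) (use a ba in \<open>auto simp add: gdom_def power2_eq_square\<close>)
  qed
  have "(gdom b a has_integral (1 + (ln a - ln b))) ({0..b} \<union> {b..a})"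
    by (rule has_integral_Un[OF i1 i2]) (rule negligible_subset[of "{b}"], auto)
  then have "(gdom b a has_integral (1 + (ln a - ln b) + 1)) (({0..b} \<union> {b..a}) \<union> {a..})"
    by (rule has_integral_Un[OF _ i3]) (rule negligible_subset[of "{a}"], use ba in auto)
  moreover have "({0..b} \<union> {b..a}) \<union> {a..} = {0..}" using b ba by auto
  ultimately have "(gdom b a has_integral (2 + ln a - ln b)) {0..}" by (simp add: algebra_simps)
  then show ?thesis
    by (subst has_integral_spike_set_eq[where T="{0..}"]) (rule negligible_subset[of "{0}"], auto)+
qed

lemma gdom_nonneg: "0 < b \<Longrightarrow> b \<le> a \<Longrightarrow> 0 \<le> gdom b a x"
  unfolding gdom_def by auto

lemma gdom_meas: "set_borel_measurable lborel {0<..} (gdom b a)"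
  unfolding gdom_def set_borel_measurable_def measurable_lborel1 by measurable

lemma gdom_int:
  assumes b: "0 < b" and ba: "b \<le> a"
  shows "set_integrable lborel {0<..} (gdom b a)"
    "(LINT x:{0<..}|lborel. gdom b a x) = 2 + ln a - ln b"
  using hk_to_lborel[OF gdom_has_integral[OF b ba] gdom_nonneg[OF b ba] gdom_meas] by auto

lemma cont_meas:
  assumes "continuous_on {0<..} f"
  shows "set_borel_measurable lborel {0<..} (f :: real \<Rightarrow> 'b::real_normed_vector)"
  unfolding set_borel_measurable_def
  using borel_measurable_continuous_on_indicator[OF _ assms] by (simp add: measurable_lborel1)

lemma weight_pos: "weight_seq M \<Longrightarrow> M p > 0"
  unfolding weight_seq_def by auto

lemma quot_mono:
  assumes "weight_seq M" shows "quot_seq M p \<le> quot_seq M (Suc p)"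
proof -
  have pos: "\<And>p. M p > 0" using assms unfolding weight_seq_def by auto
  have "\<forall>p\<ge>1. (M p)\<^sup>2 \<le> M (p - 1) * M (p + 1)"
    using assms unfolding weight_seq_def by blast
  then have "(M (Suc p))\<^sup>2 \<le> M (Suc p - 1) * M (Suc p + 1)" by (drule_tac x="Suc p" in spec) simp
  then have "M (Suc p) * M (Suc p) \<le> M p * M (Suc (Suc p))" by (simp add: power2_eq_square)
  then show ?thesis using pos[of p] pos[of "Suc p"]
    unfolding quot_seq_def by (simp add: divide_simps mult.commute)
qed

lemma exp_lin_bound:
  fixes a b :: complex
  assumes a: "Re a \<le> 0" and b: "Re b \<le> 0"
  shows "norm (exp a - exp b - (a - b) * exp b) \<le> (norm (a - b))^2"
proof -
  define S where "S = {z::complex. Re z \<le> 0}"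
  have cS: "convex S" unfolding S_def by (rule convex_halfspace_Re_le)
  have L1: "norm (exp u - exp v) \<le> 1 * norm (u - v)" if "u \<in> S" "v \<in> S" for u v
  proof (rule field_differentiable_bound[OF cS _ _ that])
    show "(exp has_field_derivative exp z) (at z within S)" for z
      by (rule has_field_derivative_at_within[OF DERIV_exp])
    show "norm (exp z) \<le> 1" if "z \<in> S" for z using that unfolding S_def by (simp add: norm_exp_eq_Re)
  qed
  have aS: "a \<in> S" and bS: "b \<in> S" using a b unfolding S_def by auto
  have seg: "closed_segment b a \<subseteq> S" by (rule closed_segment_subset[OF bS aS cS])
  have "norm ((exp a - a * exp b) - (exp b - b * exp b)) \<le> norm (a - b) * norm (a - b)"
  proof (rule field_differentiable_bound[OF convex_closed_segment, of b a "\<lambda>u. exp u - u * exp b" "\<lambda>u. exp u - exp b"])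
    show "((\<lambda>u. exp u - u * exp b) has_field_derivative exp z - exp b) (at z within closed_segment b a)" for z
      by (auto intro!: derivative_eq_intros)
    show "norm (exp z - exp b) \<le> norm (a - b)" if z: "z \<in> closed_segment b a" for z
    proof -
      have "norm (exp z - exp b) \<le> 1 * norm (z - b)" using L1 seg z bS by blast
      also have "norm (z - b) \<le> norm (a - b)" using dist_in_closed_segment[OF z] by (simp add: dist_norm norm_minus_commute)
      finally show ?thesis by simp
    qed
  qed (use aS bS in simp_all)
  moreover have "(exp a - a * exp b) - (exp b - b * exp b) = exp a - exp b - (a - b) * exp b"
    by (simp add: algebra_simps)
  ultimately show ?thesis by (simp add: power2_eq_square)
qed



definition Fm :: "(real \<Rightarrow> complex) \<Rightarrow> nat \<Rightarrow> complex \<Rightarrow> complex" where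
  "Fm \<phi> p z = (LINT x:{0<..}|lborel. (\<i> * complex_of_real x) ^ p * \<phi> x * exp (\<i> * complex_of_real x * z))"

lemma laplace_Fm: "laplace \<phi> z = Fm \<phi> 0 z"
  unfolding laplace_def Fm_def by simp

context
  fixes M :: "nat \<Rightarrow> real" and h :: real and \<phi> :: "real \<Rightarrow> complex"
  assumes wM: "weight_seq M" and hpos: "h > 0" and phi: "\<phi> \<in> CM M h"
begin

lemma phi_cont: "continuous_on {0<..} \<phi>"
  using phi unfolding CM_def by auto

lemma Mpos: "M p > 0" using weight_pos[OF wM] .

lemma CM_bdd: "bdd_above {x ^ p * norm (\<phi> x) / (h ^ p * M p) | p x. x > 0}"
proof -
  obtain C where C: "\<forall>p. \<forall>x>0. x ^ p * norm (\<phi> x) / (h ^ p * M p) \<le> C"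
    using phi unfolding CM_def by auto
  show ?thesis unfolding bdd_above_def using C by blast
qed

lemma CM_bound:
  assumes "x > 0"
  shows "x ^ p * norm (\<phi> x) \<le> CM_norm M h \<phi> * (h ^ p * M p)"
proof -
  have "x ^ p * norm (\<phi> x) / (h ^ p * M p) \<le> CM_norm M h \<phi>"
    unfolding CM_norm_def by (rule cSup_upper[OF _ CM_bdd]) (use assms in blast)
  moreover have "h ^ p * M p > 0" using hpos Mpos by simp
  ultimately show ?thesis by (simp add: divide_simps)
qed

lemma CM_norm_nonneg: "0 \<le> CM_norm M h \<phi>"
proof -
  have "0 \<le> 1 ^ 0 * norm (\<phi> 1)" by simp
  also have "\<dots> \<le> CM_norm M h \<phi> * (h ^ 0 * M 0)" by (rule CM_bound) simp
  finally show ?thesis using Mpos[of 0] by (simp add: zero_le_mult_iff)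
qed

lemma dom_bound:
  assumes x: "x > 0"
  shows "x ^ p * norm (\<phi> x) \<le> CM_norm M h \<phi> * (h ^ (p+1) * M (p+1)) *
            gdom (h * quot_seq M p) (h * quot_seq M (Suc p)) x"
proof -
  define N where "N = CM_norm M h \<phi>"
  define b where "b = h * quot_seq M p"
  define a where "a = h * quot_seq M (Suc p)"
  have N0: "N \<ge> 0" unfolding N_def by (rule CM_norm_nonneg)
  have M0: "M p > 0" "M (Suc p) > 0" "M (Suc (Suc p)) > 0" using Mpos by auto
  have b0: "b > 0" unfolding b_def quot_seq_def using hpos M0 by simp
  have a0: "a > 0" unfolding a_def quot_seq_def using hpos M0 by simp
  have bnd: "\<And>q. x ^ q * norm (\<phi> x) \<le> N * (h ^ q * M q)" unfolding N_def by (rule CM_bound[OF x])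
  consider "x \<le> b" | "b < x" "x \<le> a" | "a < x" by linarith
  then show ?thesis
  proof cases
    case 1
    have eq: "N * (h ^ (p+1) * M (p+1)) * (1 / b) = N * (h ^ p * M p)"
      unfolding b_def quot_seq_def using hpos M0 by (simp add: field_simps)
    show ?thesis using 1 bnd[of p] eq unfolding gdom_def N_def[symmetric] b_def[symmetric] a_def[symmetric]
      by simp
  next
    case 2
    have "x ^ (p+1) * norm (\<phi> x) \<le> N * (h ^ (p+1) * M (p+1))" by (rule bnd)
    then have "x * (x ^ p * norm (\<phi> x)) \<le> N * (h ^ (p+1) * M (p+1))" by (simp add: algebra_simps)
    then have "x ^ p * norm (\<phi> x) \<le> N * (h ^ (p+1) * M (p+1)) * (1 / x)"
      using x by (simp add: field_simps)
    then show ?thesis using 2 b0 unfolding gdom_def N_def[symmetric] b_def[symmetric] a_def[symmetric]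
      by simp
  next
    case 3
    have "x ^ (p+2) * norm (\<phi> x) \<le> N * (h ^ (p+2) * M (p+2))" by (rule bnd)
    also have "N * (h ^ (p+2) * M (p+2)) = N * (h ^ (p+1) * M (p+1)) * a"
      unfolding a_def quot_seq_def using hpos M0 by (simp add: field_simps)
    finally have "x^2 * (x ^ p * norm (\<phi> x)) \<le> N * (h ^ (p+1) * M (p+1)) * a"
      by (simp add: algebra_simps power_add power2_eq_square)
    then have "x ^ p * norm (\<phi> x) \<le> N * (h ^ (p+1) * M (p+1)) * (a / x^2)"
      using x by (simp add: field_simps)
    moreover have "b \<le> a" unfolding a_def b_def using quot_mono[OF wM, of p] hpos by simp
    ultimately show ?thesis using 3
      unfolding gdom_def N_def[symmetric] b_def[symmetric] a_def[symmetric]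
      by auto
  qed
qed

lemma mom_meas: "set_borel_measurable lborel {0<..} (\<lambda>x. x ^ p * norm (\<phi> x))"
  by (intro cont_meas continuous_intros phi_cont)

lemma mom_int: "set_integrable lborel {0<..} (\<lambda>x. x ^ p * norm (\<phi> x))"
  and mom_bound: "(LINT x:{0<..}|lborel. x ^ p * norm (\<phi> x)) \<le>
     CM_norm M h \<phi> * (h ^ (p+1) * M (p+1)) * (2 + ln (quot_seq M (Suc p) / quot_seq M p))"
proof -
  define K where "K = CM_norm M h \<phi> * (h ^ (p+1) * M (p+1))"
  define b where "b = h * quot_seq M p"
  define a where "a = h * quot_seq M (Suc p)"
  have q0: "quot_seq M p > 0" "quot_seq M (Suc p) > 0" unfolding quot_seq_def using Mpos by auto
  have b0: "b > 0" unfolding b_def using hpos q0 by simp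
  have ba: "b \<le> a" unfolding a_def b_def using quot_mono[OF wM, of p] hpos by simp
  have K0: "K \<ge> 0" unfolding K_def using CM_norm_nonneg hpos Mpos[of "p+1"] by simp
  have gi: "set_integrable lborel {0<..} (\<lambda>x. K * gdom b a x)"
    using gdom_int(1)[OF b0 ba] by simp
  show si: "set_integrable lborel {0<..} (\<lambda>x. x ^ p * norm (\<phi> x))"
  proof (rule set_integrable_bound[OF gi mom_meas])
    show "AE x in lborel. x \<in> {0<..} \<longrightarrow> norm (x ^ p * norm (\<phi> x)) \<le> norm (K * gdom b a x)"
    proof (intro AE_I2 impI)
      fix x :: real assume x: "x \<in> {0<..}"
      have "norm (K * gdom b a x) = K * gdom b a x" using K0 gdom_nonneg[OF b0 ba, of x] by simp
      moreover have "norm (x ^ p * norm (\<phi> x)) = x ^ p * norm (\<phi> x)" using x by simp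
      ultimately show "norm (x ^ p * norm (\<phi> x)) \<le> norm (K * gdom b a x)"
        using dom_bound[of x p] x unfolding K_def a_def b_def by simp
    qed
  qed
  have "(LINT x:{0<..}|lborel. x ^ p * norm (\<phi> x)) \<le> (LINT x:{0<..}|lborel. K * gdom b a x)"
    by (rule set_integral_mono[OF si gi]) (use dom_bound in \<open>auto simp: K_def a_def b_def\<close>)
  also have "\<dots> = K * (2 + ln a - ln b)" using gdom_int(2)[OF b0 ba] by simp
  also have "K * (2 + ln a - ln b) = K * (2 + ln (quot_seq M (Suc p) / quot_seq M p))"
    unfolding a_def b_def using hpos q0 by (simp add: ln_mult ln_div)
  finally show "(LINT x:{0<..}|lborel. x ^ p * norm (\<phi> x)) \<le>
     CM_norm M h \<phi> * (h ^ (p+1) * M (p+1)) * (2 + ln (quot_seq M (Suc p) / quot_seq M p))"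
    unfolding K_def by (simp add: algebra_simps)
qed

lemma F_meas: "set_borel_measurable lborel {0<..}
   (\<lambda>x. (\<i> * complex_of_real x) ^ p * \<phi> x * exp (\<i> * complex_of_real x * z))"
  by (intro cont_meas continuous_intros phi_cont)

lemma norm_F_integrand:
  assumes "Im z \<ge> 0" "x > 0"
  shows "norm ((\<i> * complex_of_real x) ^ p * \<phi> x * exp (\<i> * complex_of_real x * z)) \<le> x ^ p * norm (\<phi> x)"
proof -
  have "norm (exp (\<i> * complex_of_real x * z)) = exp (- x * Im z)" by (simp add: norm_exp_eq_Re)
  also have "\<dots> \<le> 1" using assms by (simp add: mult_nonneg_nonneg)
  finally have e: "norm (exp (\<i> * complex_of_real x * z)) \<le> 1" .
  have "norm ((\<i> * complex_of_real x) ^ p * \<phi> x * exp (\<i> * complex_of_real x * z))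
      = x ^ p * norm (\<phi> x) * norm (exp (\<i> * complex_of_real x * z))"
    using assms by (simp add: norm_mult norm_power)
  also have "\<dots> \<le> x ^ p * norm (\<phi> x) * 1" by (rule mult_left_mono[OF e]) (use assms in simp)
  finally show ?thesis by simp
qed

lemma F_int:
  assumes "Im z \<ge> 0"
  shows "set_integrable lborel {0<..} (\<lambda>x. (\<i> * complex_of_real x) ^ p * \<phi> x * exp (\<i> * complex_of_real x * z))"
  by (rule set_integrable_bound[OF mom_int F_meas]) (use norm_F_integrand[OF assms] in auto)

lemma F_bound:
  assumes "Im z \<ge> 0"
  shows "norm (Fm \<phi> p z) \<le> (LINT x:{0<..}|lborel. x ^ p * norm (\<phi> x))"
proof -
  have "norm (Fm \<phi> p z) \<le> (LINT x:{0<..}|lborel. norm ((\<i> * complex_of_real x) ^ p * \<phi> x * exp (\<i> * complex_of_real x * z)))"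
    unfolding Fm_def by (rule set_integral_norm_bound[OF F_int[OF assms]])
  also have "\<dots> \<le> (LINT x:{0<..}|lborel. x ^ p * norm (\<phi> x))"
    by (rule set_integral_mono[OF _ mom_int]) (use norm_F_integrand[OF assms] set_integrable_norm[OF F_int[OF assms]] in auto)
  finally show ?thesis .
qed

lemma F_taylor:
  assumes z: "Im z \<ge> 0" and w: "Im w \<ge> 0"
  shows "norm (Fm \<phi> p w - Fm \<phi> p z - (w - z) * Fm \<phi> (Suc p) z)
           \<le> (LINT x:{0<..}|lborel. x ^ (p+2) * norm (\<phi> x)) * (norm (w - z))^2"
proof -
  let ?f = "\<lambda>q u x. (\<i> * complex_of_real x) ^ q * \<phi> x * exp (\<i> * complex_of_real x * u)"
  have i1: "set_integrable lborel {0<..} (?f p w)" by (rule F_int[OF w])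
  have i2: "set_integrable lborel {0<..} (?f p z)" by (rule F_int[OF z])
  have i3: "set_integrable lborel {0<..} (\<lambda>x. (w - z) * ?f (Suc p) z x)"
    using F_int[OF z, of "Suc p"] by simp
  have eq: "Fm \<phi> p w - Fm \<phi> p z - (w - z) * Fm \<phi> (Suc p) z
      = (LINT x:{0<..}|lborel. ?f p w x - ?f p z x - (w - z) * ?f (Suc p) z x)"
    unfolding Fm_def
    by (subst set_integral_diff(2)[OF set_integral_diff(1)[OF i1 i2] i3],
        subst set_integral_diff(2)[OF i1 i2]) simp
  have "norm (LINT x:{0<..}|lborel. ?f p w x - ?f p z x - (w - z) * ?f (Suc p) z x) \<le> (LINT x:{0<..}|lborel. norm (?f p w x - ?f p z x - (w - z) * ?f (Suc p) z x))"
    by (rule set_integral_norm_bound) (intro set_integral_diff(1) i1 i2 i3)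
  also have "\<dots> \<le> (LINT x:{0<..}|lborel. x ^ (p+2) * norm (\<phi> x) * (norm (w - z))^2)"
  proof (rule set_integral_mono)
    show "set_integrable lborel {0<..} (\<lambda>x. norm (?f p w x - ?f p z x - (w - z) * ?f (Suc p) z x))"
      by (intro set_integrable_norm set_integral_diff(1) i1 i2 i3)
    show "set_integrable lborel {0<..} (\<lambda>x. x ^ (p+2) * norm (\<phi> x) * (norm (w - z))^2)"
      using mom_int[of "p+2"] by (intro set_integrable_mult_left) 
    fix x :: real assume "x \<in> {0<..}"
    then have x: "x > 0" by simp
    let ?a = "\<i> * complex_of_real x * w" and ?b = "\<i> * complex_of_real x * z"
    have eq: "?f p w x - ?f p z x - (w - z) * ?f (Suc p) z x
       = (\<i> * complex_of_real x) ^ p * \<phi> x * (exp ?a - exp ?b - (?a - ?b) * exp ?b)"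
      by (simp add: algebra_simps)
    have ra: "Re ?a \<le> 0" "Re ?b \<le> 0" using x z w by (auto simp: mult_nonneg_nonneg)
    have "norm (exp ?a - exp ?b - (?a - ?b) * exp ?b) \<le> (norm (?a - ?b))^2"
      by (rule exp_lin_bound[OF ra])
    also have "norm (?a - ?b) = x * norm (w - z)"
    proof -
      have "?a - ?b = (\<i> * complex_of_real x) * (w - z)" by (simp add: algebra_simps)
      then show ?thesis using x by (simp add: norm_mult)
    qed
    finally have e: "norm (exp ?a - exp ?b - (?a - ?b) * exp ?b) \<le> (x * norm (w - z))^2" .
    have "norm (?f p w x - ?f p z x - (w - z) * ?f (Suc p) z x)
        = x ^ p * norm (\<phi> x) * norm (exp ?a - exp ?b - (?a - ?b) * exp ?b)"
      unfolding eq using x by (simp add: norm_mult norm_power)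
    also have "\<dots> \<le> x ^ p * norm (\<phi> x) * (x * norm (w - z))^2"
      by (rule mult_left_mono[OF e]) (use x in simp)
    also have "\<dots> = x ^ (p+2) * norm (\<phi> x) * (norm (w - z))^2"
      by (simp add: power_add power_mult_distrib power2_eq_square)
    finally show "norm (?f p w x - ?f p z x - (w - z) * ?f (Suc p) z x)
        \<le> x ^ (p+2) * norm (\<phi> x) * (norm (w - z))^2" .
  qed
  also have "\<dots> = (LINT x:{0<..}|lborel. x ^ (p+2) * norm (\<phi> x)) * (norm (w - z))^2"
    by simp
  finally show ?thesis unfolding eq .
qed

lemma F_deriv:
  assumes z: "Im z > 0"
  shows "(Fm \<phi> p has_field_derivative Fm \<phi> (Suc p) z) (at z)"
proof -
  define J where "J = (LINT x:{0<..}|lborel. x ^ (p+2) * norm (\<phi> x))"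
  have ev: "eventually (\<lambda>y. Im y > 0 \<and> y \<noteq> z) (at z)"
  proof -
    have "eventually (\<lambda>y. y \<in> {y. Im y > 0}) (nhds z)"
      by (rule eventually_nhds_in_open[OF open_halfspace_Im_gt]) (use z in simp)
    then show ?thesis unfolding eventually_at_filter by (rule eventually_mono) auto
  qed
  have "((\<lambda>y. (Fm \<phi> p y - Fm \<phi> p z) / (y - z) - Fm \<phi> (Suc p) z) \<longlongrightarrow> 0) (at z)"
  proof (rule Lim_null_comparison)
    show "eventually (\<lambda>y. norm ((Fm \<phi> p y - Fm \<phi> p z) / (y - z) - Fm \<phi> (Suc p) z) \<le> J * norm (y - z)) (at z)"
      using ev
    proof (rule eventually_mono)
      fix y assume y: "Im y > 0 \<and> y \<noteq> z"
      then have yz: "y - z \<noteq> 0" by simp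
      have "(Fm \<phi> p y - Fm \<phi> p z) / (y - z) - Fm \<phi> (Suc p) z
          = (Fm \<phi> p y - Fm \<phi> p z - (y - z) * Fm \<phi> (Suc p) z) / (y - z)"
        using yz by (simp add: field_simps)
      also have "norm \<dots> = norm (Fm \<phi> p y - Fm \<phi> p z - (y - z) * Fm \<phi> (Suc p) z) / norm (y - z)"
        by (simp add: norm_divide)
      also have "\<dots> \<le> J * (norm (y - z))^2 / norm (y - z)"
      proof -
        have "norm (Fm \<phi> p y - Fm \<phi> p z - (y - z) * Fm \<phi> (Suc p) z) \<le> J * (norm (y - z))^2"
          unfolding J_def by (rule F_taylor) (use y z in auto)
        then show ?thesis by (rule divide_right_mono) simp
      qed
      also have "\<dots> = J * norm (y - z)" using yz by (simp add: power2_eq_square)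
      finally show "norm ((Fm \<phi> p y - Fm \<phi> p z) / (y - z) - Fm \<phi> (Suc p) z) \<le> J * norm (y - z)" .
    qed
    show "((\<lambda>y. J * norm (y - z)) \<longlongrightarrow> 0) (at z)"
      by (rule tendsto_eq_intros | simp)+
  qed
  then show ?thesis unfolding has_field_derivative_iff by (simp add: LIM_zero_iff)
qed

lemma open_upper: "open upper_half"
  unfolding upper_half_def by (rule open_halfspace_Im_gt)

lemma laplace_holo: "laplace \<phi> holomorphic_on upper_half"
proof -
  have "laplace \<phi> = Fm \<phi> 0" by (rule ext) (rule laplace_Fm)
  moreover have "Fm \<phi> 0 holomorphic_on upper_half"
    unfolding holomorphic_on_def
  proof
    fix z assume "z \<in> upper_half"
    then have "(Fm \<phi> 0 has_field_derivative Fm \<phi> (Suc 0) z) (at z)"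
      by (intro F_deriv) (simp add: upper_half_def)
    then show "Fm \<phi> 0 field_differentiable at z within upper_half"
      unfolding field_differentiable_def by (blast intro: has_field_derivative_at_within)
  qed
  ultimately show ?thesis by simp
qed

lemma iter_deriv:
  assumes "z \<in> upper_half"
  shows "(deriv ^^ p) (laplace \<phi>) z = Fm \<phi> p z"
  using assms
proof (induction p arbitrary: z)
  case 0
  then show ?case by (simp add: laplace_Fm)
next
  case (Suc p)
  have ev: "eventually (\<lambda>y. (deriv ^^ p) (laplace \<phi>) y = Fm \<phi> p y) (nhds z)"
  proof -
    have "eventually (\<lambda>y. y \<in> upper_half) (nhds z)"
      by (rule eventually_nhds_in_open[OF open_upper Suc.prems])
    then show ?thesis by (rule eventually_mono) (use Suc.IH in auto)
  qed
  have "(deriv ^^ Suc p) (laplace \<phi>) z = deriv ((deriv ^^ p) (laplace \<phi>)) z" by simp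
  also have "\<dots> = deriv (Fm \<phi> p) z" by (rule deriv_cong_ev[OF ev refl])
  also have "\<dots> = Fm \<phi> (Suc p) z"
    by (rule DERIV_imp_deriv, rule F_deriv) (use Suc.prems in \<open>simp add: upper_half_def\<close>)
  finally show ?case .
qed

lemma pointwise_est:
  assumes C0: "C0 > 0" and H: "H > 1" and sm: "sm_cond M C0 H" and z: "z \<in> upper_half"
  shows "norm ((deriv ^^ p) (laplace \<phi>) z) / ((H * h) ^ p * shift_seq M p) \<le> h * (2 + C0 * H) * CM_norm M h \<phi>"
proof -
  define N where "N = CM_norm M h \<phi>"
  have N0: "N \<ge> 0" unfolding N_def by (rule CM_norm_nonneg)
  have Mp: "M (Suc p) > 0" by (rule Mpos)
  have lnb: "ln (quot_seq M (Suc p) / quot_seq M p) \<le> C0 * H ^ (p+1)"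
    using sm unfolding sm_cond_def by blast
  have Hp: "H ^ p \<ge> 1" using H by simp
  have key: "2 + C0 * H ^ (p+1) \<le> (2 + C0 * H) * H ^ p"
  proof -
    have "2 \<le> 2 * H ^ p" using Hp by simp
    then show ?thesis by (simp add: algebra_simps)
  qed
  have "norm ((deriv ^^ p) (laplace \<phi>) z) = norm (Fm \<phi> p z)" using iter_deriv[OF z] by simp
  also have "\<dots> \<le> (LINT x:{0<..}|lborel. x ^ p * norm (\<phi> x))"
    by (rule F_bound) (use z in \<open>simp add: upper_half_def\<close>)
  also have "\<dots> \<le> N * (h ^ (p+1) * M (p+1)) * (2 + ln (quot_seq M (Suc p) / quot_seq M p))"
    unfolding N_def by (rule mom_bound)
  also have "\<dots> \<le> N * (h ^ (p+1) * M (p+1)) * (2 + C0 * H ^ (p+1))"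
    by (rule mult_left_mono) (use lnb N0 hpos Mp in auto)
  also have "\<dots> \<le> N * (h ^ (p+1) * M (p+1)) * ((2 + C0 * H) * H ^ p)"
    by (rule mult_left_mono[OF key]) (use N0 hpos Mp in auto)
  also have "\<dots> = h * (2 + C0 * H) * N * ((H * h) ^ p * shift_seq M p)"
    unfolding shift_seq_def by (simp add: algebra_simps power_mult_distrib)
  finally have "norm ((deriv ^^ p) (laplace \<phi>) z) \<le> h * (2 + C0 * H) * N * ((H * h) ^ p * shift_seq M p)" .
  moreover have "(H * h) ^ p * shift_seq M p > 0" unfolding shift_seq_def using H hpos Mp by simp
  ultimately show ?thesis unfolding N_def by (simp add: pos_divide_le_eq)
qed

lemma AN_result:
  assumes C0: "C0 > 0" and H: "H > 1" and sm: "sm_cond M C0 H"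
  shows "laplace \<phi> \<in> AN (shift_seq M) (H * h)"
    and "AN_norm (shift_seq M) (H * h) (laplace \<phi>) \<le> h * (2 + C0 * H) * CM_norm M h \<phi>"
proof -
  show "laplace \<phi> \<in> AN (shift_seq M) (H * h)"
    unfolding AN_def using laplace_holo pointwise_est[OF assms] by blast
  have ne: "{norm ((deriv ^^ p) (laplace \<phi>) z) / ((H * h) ^ p * shift_seq M p) | p z. z \<in> upper_half} \<noteq> {}"
    unfolding upper_half_def by (auto intro!: exI[of _ \<i>])
  show "AN_norm (shift_seq M) (H * h) (laplace \<phi>) \<le> h * (2 + C0 * H) * CM_norm M h \<phi>"
    unfolding AN_norm_def by (rule cSup_least[OF ne]) (use pointwise_est[OF assms] in blast)
qed

end


lemma set_integral_sum_fin:
  fixes f :: "'i \<Rightarrow> 'a \<Rightarrow> real"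
  assumes "finite I" "\<And>i. i \<in> I \<Longrightarrow> set_integrable M A (f i)"
  shows "set_integrable M A (\<lambda>x. \<Sum>i\<in>I. f i x)"
    "(LINT x:A|M. (\<Sum>i\<in>I. f i x)) = (\<Sum>i\<in>I. LINT x:A|M. f i x)"
proof -
  have eq: "(\<lambda>x. indicator A x *\<^sub>R (\<Sum>i\<in>I. f i x)) = (\<lambda>x. \<Sum>i\<in>I. indicator A x *\<^sub>R f i x)"
    by (simp add: sum_distrib_left)
  show "set_integrable M A (\<lambda>x. \<Sum>i\<in>I. f i x)"
    unfolding set_integrable_def eq using assms unfolding set_integrable_def by (intro Bochner_Integration.integrable_sum) auto
  show "(LINT x:A|M. (\<Sum>i\<in>I. f i x)) = (\<Sum>i\<in>I. LINT x:A|M. f i x)"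
    unfolding set_lebesgue_integral_def eq using assms unfolding set_integrable_def by (intro Bochner_Integration.integral_sum) auto
qed

lemma G_cont:
  fixes w :: "real \<Rightarrow> real"
  assumes cont: "continuous_on {0<..} w"
    and b1: "\<And>x. x > 0 \<Longrightarrow> \<bar>w x\<bar> \<le> C * x"
    and b2: "\<And>x. x > 0 \<Longrightarrow> \<bar>w x\<bar> \<le> C / x^2"
  shows "continuous_on {0..1} (\<lambda>u. if 0 < u \<and> u < 1 then w (- ln u) else 0)"
  (is "continuous_on _ ?G")
proof -
  have c1: "continuous_on {0<..<1} (\<lambda>u. w (- ln u))"
    by (rule continuous_on_compose2[OF cont]) (auto intro!: continuous_intros)
  have c2: "continuous_on {0<..<1} ?G"
    by (rule continuous_on_cong[THEN iffD1, OF refl _ c1]) auto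
  show ?thesis unfolding continuous_on_eq_continuous_within
  proof
    fix u :: real assume u: "u \<in> {0..1}"
    consider "u = 0" | "u = 1" | "0 < u" "u < 1" using u by fastforce
    then show "continuous (at u within {0..1}) ?G"
    proof cases
      case 1
      have ev: "eventually (\<lambda>u. 0 < u \<and> u < (1::real)) (at_right 0)"
        using eventually_at_right_real[of 0 1] by simp
      have "(?G \<longlongrightarrow> 0) (at_right 0)"
      proof (rule Lim_null_comparison)
        show "eventually (\<lambda>u. norm (?G u) \<le> C / (ln u)^2) (at_right 0)"
          using ev
        proof (rule eventually_mono)
          fix u :: real assume u: "0 < u \<and> u < 1"
          then have "- ln u > 0" by simp
          from b2[OF this] show "norm (?G u) \<le> C / (ln u)^2" using u by simp
        qed
        show "((\<lambda>u. C / (ln u)^2) \<longlongrightarrow> 0) (at_right (0::real))" by real_asymp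
      qed
      then show ?thesis using 1 by (simp add: continuous_within at_within_Icc_at_right)
    next
      case 2
      have ev: "eventually (\<lambda>u. 0 < u \<and> u < (1::real)) (at_left 1)"
        using eventually_at_left_real[of 0 1] by simp
      have "(?G \<longlongrightarrow> 0) (at_left 1)"
      proof (rule Lim_null_comparison)
        show "eventually (\<lambda>u. norm (?G u) \<le> C * (- ln u)) (at_left 1)"
          using ev
        proof (rule eventually_mono)
          fix u :: real assume u: "0 < u \<and> u < 1"
          then have "- ln u > 0" by simp
          from b1[OF this] show "norm (?G u) \<le> C * (- ln u)" using u by simp
        qed
        show "((\<lambda>u. C * (- ln u)) \<longlongrightarrow> 0) (at_left (1::real))" by real_asymp
      qed
      then show ?thesis using 2 by (simp add: continuous_within at_within_Icc_at_left)
    next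
      case 3
      then have "isCont ?G u" using c2 continuous_on_eq_continuous_at[of "{0<..<1::real}" ?G] by auto
      then show ?thesis by (rule continuous_at_imp_continuous_at_within)
    qed
  qed
qed

lemma real_uniq:
  fixes w :: "real \<Rightarrow> real"
  assumes cont: "continuous_on {0<..} w"
    and b1: "\<And>x. x > 0 \<Longrightarrow> \<bar>w x\<bar> \<le> C * x"
    and b2: "\<And>x. x > 0 \<Longrightarrow> \<bar>w x\<bar> \<le> C / x^2"
    and b3: "\<And>x. x > 0 \<Longrightarrow> \<bar>w x\<bar> \<le> C"
    and mom: "\<And>n::nat. (LINT x:{0<..}|lborel. w x * exp (-(real n + 1) * x)) = 0"
    and x0: "x0 > 0"
  shows "w x0 = 0"
proof -
  have C0: "C \<ge> 0" using b3[of 1] by simp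
  have gi: "set_integrable lborel {0<..} (gdom 1 1)" and gI: "(LINT x:{0<..}|lborel. gdom 1 1 x) = 2"
    using gdom_int[of 1 1] by auto
  have dom: "\<bar>w x\<bar> \<le> C * gdom 1 1 x" if "x > 0" for x
    using b2[OF that] b3[OF that] unfolding gdom_def by (auto simp: divide_simps)
  have gnn: "gdom 1 1 x \<ge> 0" for x using gdom_nonneg[of 1 1] by simp
  have intK: "set_integrable lborel {0<..} v"
    if vc: "continuous_on {0<..} v" and vb: "\<And>x. x > 0 \<Longrightarrow> \<bar>v x\<bar> \<le> K * \<bar>w x\<bar>" and K: "K \<ge> 0"
    for v :: "real \<Rightarrow> real" and K
  proof (rule set_integrable_bound[of _ _ "\<lambda>x. (K * C) * gdom 1 1 x"])
    show "set_integrable lborel {0<..} (\<lambda>x. (K * C) * gdom 1 1 x)" using gi by simp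
    show "set_borel_measurable lborel {0<..} v" by (rule cont_meas[OF vc])
    show "AE x in lborel. x \<in> {0<..} \<longrightarrow> norm (v x) \<le> norm (K * C * gdom 1 1 x)"
    proof (intro AE_I2 impI)
      fix x :: real assume "x \<in> {0<..}"
      then have x: "x > 0" by simp
      have "\<bar>v x\<bar> \<le> K * \<bar>w x\<bar>" by (rule vb[OF x])
      also have "\<dots> \<le> K * (C * gdom 1 1 x)" by (rule mult_left_mono[OF dom[OF x] K])
      finally show "norm (v x) \<le> norm (K * C * gdom 1 1 x)" using K C0 gnn[of x] by (simp add: abs_mult)
    qed
  qed
  define G where "G = (\<lambda>u. if 0 < u \<and> u < 1 then w (- ln u) else 0)"
  have Gc: "continuous_on {0..1} G" unfolding G_def by (rule G_cont[OF cont b1 b2])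
  have wG: "w x = G (exp (- x))" if "x > 0" for x using that unfolding G_def by simp
  have momi: "set_integrable lborel {0<..} (\<lambda>x. w x * exp (-(real i + 1) * x))" for i
  proof (rule intK[of _ 1])
    show "continuous_on {0<..} (\<lambda>x. w x * exp (-(real i + 1) * x))" by (auto intro!: continuous_intros cont)
    fix x :: real assume x: "x > 0"
    have "-(real i + 1) * x \<le> 0" using x by (simp add: mult_nonpos_nonneg)
    then have "exp (-(real i + 1) * x) \<le> 1" by simp
    then have "\<bar>w x\<bar> * exp (-(real i + 1) * x) \<le> \<bar>w x\<bar> * 1" by (rule mult_left_mono) simp
    then show "\<bar>w x * exp (-(real i + 1) * x)\<bar> \<le> 1 * \<bar>w x\<bar>" by (simp add: abs_mult)
  qed simp
  define ex where "ex = (\<lambda>(i::nat) x. exp (-(real i + 1) * x))"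
  have momi': "set_integrable lborel {0<..} (\<lambda>x. a * (w x * ex i x))" for i a
    unfolding ex_def by (rule set_integrable_mult_right, rule momi)
  have mom': "(LINT x:{0<..}|lborel. a * (w x * ex i x)) = 0" for i a
    unfolding ex_def set_integral_mult_right mom by simp
  define I2 where "I2 = (LINT x:{0<..}|lborel. w x * w x * exp (- x))"
  have i2i: "set_integrable lborel {0<..} (\<lambda>x. w x * w x * exp (- x))"
  proof (rule intK[of _ C])
    show "continuous_on {0<..} (\<lambda>x. w x * w x * exp (- x))" by (auto intro!: continuous_intros cont)
    fix x :: real assume x: "x > 0"
    have "exp (- x) \<le> 1" using x by simp
    have "\<bar>w x * w x * exp (- x)\<bar> = \<bar>w x\<bar> * \<bar>w x\<bar> * exp (- x)" by (simp add: abs_mult)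
    also have "\<dots> \<le> C * \<bar>w x\<bar> * 1"
      by (intro mult_mono) (use b3[OF x] \<open>exp (- x) \<le> 1\<close> C0 in auto)
    finally show "\<bar>w x * w x * exp (- x)\<bar> \<le> C * \<bar>w x\<bar>" by simp
  qed (rule C0)
  have small: "I2 \<le> 2 * C * e" if e: "e > 0" for e
  proof -
    obtain g where gp: "polynomial_function g" and ge: "\<forall>u\<in>{0..1}. norm (G u - g u) < e"
      using Stone_Weierstrass_polynomial_function[OF compact_Icc Gc e] by blast
    have "real_polynomial_function g" using gp real_polynomial_function_eq by blast
    then obtain a n where g_eq: "g = (\<lambda>u. \<Sum>i\<le>n. a i * u ^ i)"
      using real_polynomial_function_iff_sum by blast
    have pt: "w x * g (exp (- x)) * exp (- x) = (\<Sum>i\<le>n. a i * (w x * ex i x))" for x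
    proof -
      have "exp (-(real i + 1) * x) = exp (- x) ^ i * exp (- x)" for i
      proof -
        have "-(real i + 1) * x = real i * (- x) + (- x)" by (simp add: algebra_simps)
        then show ?thesis by (simp only: exp_add exp_of_nat_mult)
      qed
      then show ?thesis unfolding g_eq ex_def by (simp add: sum_distrib_left sum_distrib_right algebra_simps)
    qed
    have pint: "set_integrable lborel {0<..} (\<lambda>x. w x * g (exp (- x)) * exp (- x))"
      unfolding pt by (rule set_integral_sum_fin(1)) (simp, rule momi')
    have p0: "(LINT x:{0<..}|lborel. w x * g (exp (- x)) * exp (- x)) = 0"
      unfolding pt by (subst set_integral_sum_fin(2)) (simp_all only: momi' mom' finite_atMost sum.neutral_const)
    have dint: "set_integrable lborel {0<..} (\<lambda>x. w x * w x * exp (- x) - w x * g (exp (- x)) * exp (- x))"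
      by (rule set_integral_diff(1)[OF i2i pint])
    have "I2 = (LINT x:{0<..}|lborel. w x * w x * exp (- x) - w x * g (exp (- x)) * exp (- x))"
      unfolding I2_def by (simp add: set_integral_diff(2)[OF i2i pint] p0)
    also have "\<dots> \<le> (LINT x:{0<..}|lborel. e * (C * gdom 1 1 x))"
    proof (rule set_integral_mono[OF dint])
      show "set_integrable lborel {0<..} (\<lambda>x. e * (C * gdom 1 1 x))" using gi by simp
      fix x :: real assume "x \<in> {0<..}"
      then have x: "x > 0" by simp
      have ex: "exp (- x) \<in> {0..1}" using x by simp
      have "\<bar>w x - g (exp (- x))\<bar> < e" using ge ex wG[OF x] by auto
      have "w x * w x * exp (- x) - w x * g (exp (- x)) * exp (- x) = w x * (w x - g (exp (- x))) * exp (- x)"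
        by (simp add: algebra_simps)
      also have "\<dots> \<le> \<bar>w x\<bar> * \<bar>w x - g (exp (- x))\<bar> * 1"
      proof -
        have "w x * (w x - g (exp (- x))) * exp (- x) \<le> \<bar>w x * (w x - g (exp (- x))) * exp (- x)\<bar>" by simp
        also have "\<dots> = \<bar>w x\<bar> * \<bar>w x - g (exp (- x))\<bar> * exp (- x)" by (simp add: abs_mult)
        also have "\<dots> \<le> \<bar>w x\<bar> * \<bar>w x - g (exp (- x))\<bar> * 1" by (rule mult_left_mono) (use x in auto)
        finally show ?thesis .
      qed
      also have "\<dots> \<le> (C * gdom 1 1 x) * e"
        using \<open>\<bar>w x - g (exp (- x))\<bar> < e\<close> dom[OF x]
        by (simp, intro mult_mono) auto
      finally show "w x * w x * exp (- x) - w x * g (exp (- x)) * exp (- x) \<le> e * (C * gdom 1 1 x)"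
        by (simp add: algebra_simps)
    qed
    also have "\<dots> = 2 * C * e" using gI by simp
    finally show ?thesis .
  qed
  have I2le: "I2 \<le> 0"
  proof (rule ccontr)
    assume "\<not> I2 \<le> 0"
    then have pos: "I2 > 0" by simp
    have "I2 \<le> 2 * C * (I2 / (2 * C + 1))" by (rule small) (use pos C0 in simp)
    also have "\<dots> < I2" using pos C0 by (simp add: field_simps)
    finally show False by simp
  qed
  have I2ge: "I2 \<ge> 0" unfolding I2_def set_lebesgue_integral_def
    by (rule Bochner_Integration.integral_nonneg) (auto simp: indicator_def)
  have AE0: "AE x in lborel. indicator {0<..} x *\<^sub>R (w x * w x * exp (- x)) = 0"
  proof -
    have "integral\<^sup>L lborel (\<lambda>x. indicator {0<..} x *\<^sub>R (w x * w x * exp (- x))) = 0"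
    proof -
      have "I2 = 0" using I2le I2ge by simp
      then show ?thesis unfolding I2_def set_lebesgue_integral_def .
    qed
    then show ?thesis
      using integral_nonneg_eq_0_iff_AE[of lborel "\<lambda>x. indicator {0<..} x *\<^sub>R (w x * w x * exp (- x))"]
        i2i unfolding set_integrable_def by (auto simp: indicator_def)
  qed
  show "w x0 = 0"
  proof (rule ccontr)
    assume nz: "w x0 \<noteq> 0"
    obtain e where e: "e > 0" and ev: "\<forall>y\<in>{0<..}. dist x0 y < e \<longrightarrow> w y \<noteq> 0"
      using continuous_on_avoid[OF cont _ nz] x0 by auto
    define r where "r = min (e/2) (x0/2)"
    have r: "r > 0" "r < e" "r < x0" unfolding r_def using e x0 by auto
    from AE0 obtain N where N: "{x \<in> space lborel. \<not> indicator {0<..} x *\<^sub>R (w x * w x * exp (- x)) = 0} \<subseteq> N"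
      "emeasure lborel N = 0" "N \<in> sets lborel" by (rule AE_E)
    have sub: "{x0 - r .. x0 + r} \<subseteq> N"
    proof
      fix y assume y: "y \<in> {x0 - r .. x0 + r}"
      then have y0: "y > 0" using r by auto
      have "dist x0 y < e" using y r by (auto simp: dist_real_def)
      then have "w y \<noteq> 0" using ev y0 by auto
      then have "indicator {0<..} y *\<^sub>R (w y * w y * exp (- y)) \<noteq> 0" using y0 by simp
      then show "y \<in> N" using N(1) by auto
    qed
    have "emeasure lborel {x0 - r .. x0 + r} \<le> emeasure lborel N"
      by (rule emeasure_mono[OF sub N(3)])
    moreover have "emeasure lborel {x0 - r .. x0 + r} = ennreal (2 * r)" using r by simp
    ultimately show False using N(2) r by simp
  qed
qed



lemma set_integral_Re:
  fixes f :: "'a \<Rightarrow> complex"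
  assumes "set_integrable M A f"
  shows "(LINT x:A|M. Re (f x)) = Re (LINT x:A|M. f x)"
    and "(LINT x:A|M. Im (f x)) = Im (LINT x:A|M. f x)"
  using assms unfolding set_lebesgue_integral_def set_integrable_def
  by (simp_all add: integral_Re[symmetric] integral_Im[symmetric])

lemma CM_diff:
  assumes "\<phi> \<in> CM M h1" "\<psi> \<in> CM M h2" "h1 > 0" "h2 > 0" "\<And>p. M p > 0"
  shows "(\<lambda>x. \<phi> x - \<psi> x) \<in> CM M (max h1 h2)"
proof -
  obtain C1 where C1: "\<forall>p. \<forall>x>0. x ^ p * norm (\<phi> x) / (h1 ^ p * M p) \<le> C1"
    using assms(1) unfolding CM_def by auto
  obtain C2 where C2: "\<forall>p. \<forall>x>0. x ^ p * norm (\<psi> x) / (h2 ^ p * M p) \<le> C2"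
    using assms(2) unfolding CM_def by auto
  have c: "continuous_on {0<..} (\<lambda>x. \<phi> x - \<psi> x)"
    using assms(1,2) unfolding CM_def by (auto intro!: continuous_intros)
  let ?h = "max h1 h2"
  have "x ^ p * norm (\<phi> x - \<psi> x) / (?h ^ p * M p) \<le> C1 + C2" if x: "x > 0" for p x
  proof -
    have Mp: "M p > 0" by (rule assms(5))
    have d1: "x ^ p * norm (\<phi> x) / (?h ^ p * M p) \<le> x ^ p * norm (\<phi> x) / (h1 ^ p * M p)"
      by (rule divide_left_mono) (use x Mp assms(3,4) in \<open>auto intro!: mult_right_mono power_mono\<close>)
    have d2: "x ^ p * norm (\<psi> x) / (?h ^ p * M p) \<le> x ^ p * norm (\<psi> x) / (h2 ^ p * M p)"
      by (rule divide_left_mono) (use x Mp assms(3,4) in \<open>auto intro!: mult_right_mono power_mono\<close>)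
    have "x ^ p * norm (\<phi> x - \<psi> x) \<le> x ^ p * norm (\<phi> x) + x ^ p * norm (\<psi> x)"
      using mult_left_mono[OF norm_triangle_ineq4[of "\<phi> x" "\<psi> x"], of "x ^ p"] x by (simp add: algebra_simps)
    then have "x ^ p * norm (\<phi> x - \<psi> x) / (?h ^ p * M p)
        \<le> x ^ p * norm (\<phi> x) / (?h ^ p * M p) + x ^ p * norm (\<psi> x) / (?h ^ p * M p)"
      using Mp assms(3,4) by (simp add: add_divide_distrib[symmetric] divide_right_mono)
    also have "\<dots> \<le> C1 + C2" using d1 d2 C1 C2 x by (meson add_mono order_trans)
    finally show ?thesis .
  qed
  then show ?thesis unfolding CM_def using c by blast
qed

lemma inj_main:
  assumes wM: "weight_seq M" and phi: "\<phi> \<in> CM M h1" and psi: "\<psi> \<in> CM M h2"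
    and h1: "h1 > 0" and h2: "h2 > 0"
    and eq: "\<forall>z\<in>upper_half. laplace \<phi> z = laplace \<psi> z" and x0: "x0 > 0"
  shows "\<phi> x0 = \<psi> x0"
proof -
  define dd where "dd = (\<lambda>x. \<phi> x - \<psi> x)"
  define h where "h = max h1 h2"
  have hpos: "h > 0" unfolding h_def using h1 by simp
  have chi: "dd \<in> CM M h" unfolding dd_def h_def
    by (rule CM_diff[OF phi psi h1 h2 weight_pos[OF wM]])
  have lap0: "laplace dd z = 0" if z: "z \<in> upper_half" for z
  proof -
    have Iz: "Im z \<ge> 0" using z unfolding upper_half_def by simp
    have i1: "set_integrable lborel {0<..} (\<lambda>x. \<phi> x * exp (\<i> * complex_of_real x * z))"
      using F_int[OF wM h1 phi Iz, of 0] by simp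
    have i2: "set_integrable lborel {0<..} (\<lambda>x. \<psi> x * exp (\<i> * complex_of_real x * z))"
      using F_int[OF wM h2 psi Iz, of 0] by simp
    have "laplace dd z = (LINT x:{0<..}|lborel. \<phi> x * exp (\<i> * complex_of_real x * z) - \<psi> x * exp (\<i> * complex_of_real x * z))"
      unfolding laplace_def dd_def by (simp add: algebra_simps)
    also have "\<dots> = laplace \<phi> z - laplace \<psi> z"
      unfolding laplace_def by (rule set_integral_diff(2)[OF i1 i2])
    also have "\<dots> = 0" using eq z by simp
    finally show ?thesis .
  qed
  have F1: "Fm dd 1 z = 0" if z: "z \<in> upper_half" for z
  proof -
    have "Fm dd 1 z = (deriv ^^ 1) (laplace dd) z" using iter_deriv[OF wM hpos chi z, of 1] by simp
    also have "\<dots> = deriv (laplace dd) z" by simp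
    also have "\<dots> = deriv (\<lambda>_. 0) z"
    proof (rule deriv_cong_ev[OF _ refl])
      have "eventually (\<lambda>y. y \<in> upper_half) (nhds z)"
        by (rule eventually_nhds_in_open[OF open_upper[OF wM hpos chi] z])
      then show "eventually (\<lambda>y. laplace dd y = 0) (nhds z)"
        by (rule eventually_mono) (rule lap0)
    qed
    also have "\<dots> = 0" by simp
    finally show ?thesis .
  qed
  define v where "v = (\<lambda>(n::nat) x. complex_of_real x * dd x * complex_of_real (exp (-(real n + 1) * x)))"
  have vint: "set_integrable lborel {0<..} (v n)" and v0: "(LINT x:{0<..}|lborel. v n x) = 0" for n
  proof -
    define z where "z = \<i> * complex_of_real (real n + 1)"
    have z: "z \<in> upper_half" unfolding z_def upper_half_def by simp
    have ie: "(\<i> * complex_of_real x) ^ 1 * dd x * exp (\<i> * complex_of_real x * z) = \<i> * v n x" for x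
    proof -
      have "\<i> * complex_of_real x * z = complex_of_real (-(real n + 1) * x)"
        unfolding z_def by (simp add: algebra_simps)
      then have "exp (\<i> * complex_of_real x * z) = complex_of_real (exp (-(real n + 1) * x))"
        by (simp only: exp_of_real)
      then show ?thesis unfolding v_def by (simp add: algebra_simps)
    qed
    have "set_integrable lborel {0<..} (\<lambda>x. \<i> * v n x)"
      using F_int[OF wM hpos chi, of z 1] z unfolding ie upper_half_def by simp
    then show vi: "set_integrable lborel {0<..} (v n)" by simp
    have "0 = Fm dd 1 z" using F1[OF z] by simp
    also have "\<dots> = \<i> * (LINT x:{0<..}|lborel. v n x)" unfolding Fm_def ie by simp
    finally show "(LINT x:{0<..}|lborel. v n x) = 0" by simp
  qed
  define N where "N = CM_norm M h dd"
  have N0: "N \<ge> 0" unfolding N_def by (rule CM_norm_nonneg[OF wM hpos chi])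
  have Mp: "M p > 0" for p by (rule weight_pos[OF wM])
  define C where "C = N * (M 0 + h * M 1 + h ^ 3 * M 3)"
  have cb: "x ^ p * norm (dd x) \<le> N * (h ^ p * M p)" if "x > 0" for x p
    unfolding N_def by (rule CM_bound[OF wM hpos chi that])
  have t0: "0 \<le> N * M 0" "0 \<le> N * (h * M 1)" "0 \<le> N * (h ^ 3 * M 3)"
    using N0 Mp[of 0] Mp[of 1] Mp[of 3] hpos by auto
  have bb1: "x * norm (dd x) \<le> C * x" if x: "x > 0" for x
  proof -
    have "norm (dd x) \<le> N * M 0" using cb[OF x, of 0] by simp
    also have "\<dots> \<le> C" unfolding C_def using t0 by (simp add: algebra_simps)
    finally show ?thesis using x by (simp add: mult.commute)
  qed
  have bb3: "x * norm (dd x) \<le> C" if x: "x > 0" for x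
  proof -
    have "x * norm (dd x) \<le> N * (h * M 1)" using cb[OF x, of 1] by simp
    also have "\<dots> \<le> C" unfolding C_def using t0 by (simp add: algebra_simps)
    finally show ?thesis .
  qed
  have bb2: "x * norm (dd x) \<le> C / x^2" if x: "x > 0" for x
  proof -
    have "x^2 * (x * norm (dd x)) = x ^ 3 * norm (dd x)" by (simp add: power2_eq_square power3_eq_cube)
    also have "\<dots> \<le> N * (h ^ 3 * M 3)" by (rule cb[OF x])
    also have "\<dots> \<le> C" unfolding C_def using t0 by (simp add: algebra_simps)
    finally show ?thesis using x by (simp add: field_simps)
  qed
  have cchi: "continuous_on {0<..} dd" using chi unfolding CM_def by auto
  have ab: "\<bar>x * r\<bar> \<le> x * norm (dd x)" if "x > 0" "\<bar>r\<bar> \<le> norm (dd x)" for x r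
    using that by (simp add: abs_mult mult_left_mono)
  have re0: "x0 * Re (dd x0) = 0"
  proof (rule real_uniq[of "\<lambda>x. x * Re (dd x)" C])
    show "continuous_on {0<..} (\<lambda>x. x * Re (dd x))" by (auto intro!: continuous_intros cchi)
    show "\<bar>x * Re (dd x)\<bar> \<le> C * x" if "x > 0" for x
      by (rule order_trans[OF ab[OF that abs_Re_le_cmod] bb1[OF that]])
    show "\<bar>x * Re (dd x)\<bar> \<le> C / x^2" if "x > 0" for x
      by (rule order_trans[OF ab[OF that abs_Re_le_cmod] bb2[OF that]])
    show "\<bar>x * Re (dd x)\<bar> \<le> C" if "x > 0" for x
      by (rule order_trans[OF ab[OF that abs_Re_le_cmod] bb3[OF that]])
    show "(LINT x:{0<..}|lborel. x * Re (dd x) * exp (-(real n + 1) * x)) = 0" for n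
    proof -
      have "(LINT x:{0<..}|lborel. x * Re (dd x) * exp (-(real n + 1) * x)) = (LINT x:{0<..}|lborel. Re (v n x))"
        unfolding v_def by simp
      also have "\<dots> = Re (LINT x:{0<..}|lborel. v n x)" by (rule set_integral_Re(1)[OF vint])
      finally show ?thesis using v0 by simp
    qed
  qed (rule x0)
  have im0: "x0 * Im (dd x0) = 0"
  proof (rule real_uniq[of "\<lambda>x. x * Im (dd x)" C])
    show "continuous_on {0<..} (\<lambda>x. x * Im (dd x))" by (auto intro!: continuous_intros cchi)
    show "\<bar>x * Im (dd x)\<bar> \<le> C * x" if "x > 0" for x
      by (rule order_trans[OF ab[OF that abs_Im_le_cmod] bb1[OF that]])
    show "\<bar>x * Im (dd x)\<bar> \<le> C / x^2" if "x > 0" for x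
      by (rule order_trans[OF ab[OF that abs_Im_le_cmod] bb2[OF that]])
    show "\<bar>x * Im (dd x)\<bar> \<le> C" if "x > 0" for x
      by (rule order_trans[OF ab[OF that abs_Im_le_cmod] bb3[OF that]])
    show "(LINT x:{0<..}|lborel. x * Im (dd x) * exp (-(real n + 1) * x)) = 0" for n
    proof -
      have "(LINT x:{0<..}|lborel. x * Im (dd x) * exp (-(real n + 1) * x)) = (LINT x:{0<..}|lborel. Im (v n x))"
        unfolding v_def by simp
      also have "\<dots> = Im (LINT x:{0<..}|lborel. v n x)" by (rule set_integral_Re(2)[OF vint])
      finally show ?thesis using v0 by simp
    qed
  qed (rule x0)
  have "dd x0 = 0" using re0 im0 x0 by (simp add: complex_eq_iff)
  then show ?thesis unfolding dd_def by simp
qed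


theorem lemma2p12:
  fixes M :: "nat \<Rightarrow> real" and C0 H :: real
  assumes "weight_seq M" and "C0 > 0" and "H > 1" and "sm_cond M C0 H"
  shows "(\<forall>h>0. (\<forall>\<phi>\<in>CM M h. laplace \<phi> \<in> AN (shift_seq M) (H * h)) \<and>
            (\<exists>C. \<forall>\<phi>\<in>CM M h.
                 AN_norm (shift_seq M) (H * h) (laplace \<phi>) \<le> C * CM_norm M h \<phi>))
       \<and> (\<forall>\<phi>\<in>CM_roumieu M. laplace \<phi> \<in> AN_roumieu (shift_seq M))
       \<and> (\<forall>h>0. \<exists>k>0. \<exists>C. \<forall>\<phi>\<in>CM M h. laplace \<phi> \<in> AN (shift_seq M) k \<and>
                 AN_norm (shift_seq M) k (laplace \<phi>) \<le> C * CM_norm M h \<phi>)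
       \<and> (\<forall>\<phi>\<in>CM_roumieu M. \<forall>\<psi>\<in>CM_roumieu M.
            (\<forall>z\<in>upper_half. laplace \<phi> z = laplace \<psi> z) \<longrightarrow> (\<forall>x>0. \<phi> x = \<psi> x))"
proof (intro conjI)
  note AR = AN_result[OF assms(1) _ _ assms(2,3,4)]
  show "\<forall>h>0. (\<forall>\<phi>\<in>CM M h. laplace \<phi> \<in> AN (shift_seq M) (H * h)) \<and>
            (\<exists>C. \<forall>\<phi>\<in>CM M h.
                 AN_norm (shift_seq M) (H * h) (laplace \<phi>) \<le> C * CM_norm M h \<phi>)"
  proof (intro allI impI conjI ballI)
    fix h :: real and \<phi> assume h: "h > 0" and "\<phi> \<in> CM M h"
    then show "laplace \<phi> \<in> AN (shift_seq M) (H * h)" by (rule AR(1))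
  next
    fix h :: real assume h: "h > 0"
    show "\<exists>C. \<forall>\<phi>\<in>CM M h. AN_norm (shift_seq M) (H * h) (laplace \<phi>) \<le> C * CM_norm M h \<phi>"
      by (rule exI[of _ "h * (2 + C0 * H)"]) (use AR(2)[OF h] in blast)
  qed
  show "\<forall>\<phi>\<in>CM_roumieu M. laplace \<phi> \<in> AN_roumieu (shift_seq M)"
  proof
    fix \<phi> assume "\<phi> \<in> CM_roumieu M"
    then obtain h where h: "h > 0" and phi: "\<phi> \<in> CM M h" unfolding CM_roumieu_def by auto
    have "laplace \<phi> \<in> AN (shift_seq M) (H * h)" by (rule AR(1)[OF h phi])
    moreover have "H * h > 0" using h assms(3) by simp
    ultimately show "laplace \<phi> \<in> AN_roumieu (shift_seq M)" unfolding AN_roumieu_def by auto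
  qed
  show "\<forall>h>0. \<exists>k>0. \<exists>C. \<forall>\<phi>\<in>CM M h. laplace \<phi> \<in> AN (shift_seq M) k \<and>
                 AN_norm (shift_seq M) k (laplace \<phi>) \<le> C * CM_norm M h \<phi>"
  proof (intro allI impI)
    fix h :: real assume h: "h > 0"
    have "H * h > 0" using h assms(3) by simp
    moreover have "\<forall>\<phi>\<in>CM M h. laplace \<phi> \<in> AN (shift_seq M) (H * h) \<and>
                 AN_norm (shift_seq M) (H * h) (laplace \<phi>) \<le> h * (2 + C0 * H) * CM_norm M h \<phi>"
      using AR[OF h] by blast
    ultimately show "\<exists>k>0. \<exists>C. \<forall>\<phi>\<in>CM M h. laplace \<phi> \<in> AN (shift_seq M) k \<and>
                 AN_norm (shift_seq M) k (laplace \<phi>) \<le> C * CM_norm M h \<phi>" by blast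
  qed
  show "\<forall>\<phi>\<in>CM_roumieu M. \<forall>\<psi>\<in>CM_roumieu M.
            (\<forall>z\<in>upper_half. laplace \<phi> z = laplace \<psi> z) \<longrightarrow> (\<forall>x>0. \<phi> x = \<psi> x)"
  proof (intro ballI impI allI)
    fix \<phi> \<psi> and x :: real
    assume "\<phi> \<in> CM_roumieu M" "\<psi> \<in> CM_roumieu M" and eq: "\<forall>z\<in>upper_half. laplace \<phi> z = laplace \<psi> z"
      and x: "x > 0"
    then obtain h1 h2 where "h1 > 0" "\<phi> \<in> CM M h1" "h2 > 0" "\<psi> \<in> CM M h2"
      unfolding CM_roumieu_def by auto
    then show "\<phi> x = \<psi> x" using inj_main[OF assms(1) _ _ _ _ eq x] by blast
  qed
qed

end
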